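(* Let $m_c\in H$, with local components $m_\lambda=\sum_{j=0,1}Y^j\sum_{\ell\ge0}b^\lambda_{j,\ell}s_\lambda^\ell$ for $\lambda\in\Lambda$. Then there exist real numbers $\alpha$ and $\beta$ such that $$v_p\big(b^\lambda_{j,\ell}\big)\ \ge\ -\big(\alpha\log_p(\ell)+\beta\big)$$ for all $\lambda\in\Lambda$, all $j\in\{0,1\}$ and all integers $\ell\ge1$.
   Context: Standing setup. Let $k$ be a finite field of odd characteristic $p$, $W(k)$ its ring of Witt vectors, $K$ the fraction field of $W(k)$, $v_p$ the $p$-adic valuation on $K$, $|\cdot|$ the $p$-adic absolute value, and $\log_p$ the real logarithm to base $p$. Let $g\ge1$ and let $\lambda_1,\dots,\lambda_{2g+1}\in W(k)$ have pairwise distinct reductions modulo $p$. Put $Q(t)=\prod_{i=1}^{2g+1}(t-\lambda_i)$ and $h(t)=\frac{Q'(t)}{2Q(t)}$. Let $\Lambda=\{\lambda_1,\dots,\lambda_{2g+1},\infty\}$, $\Lambda_0=\Lambda\setminus\{\infty\}$. The local parameter at $\lambda\in\Lambda_0$ is $s_\lambda=t-\lambda$, and at $\infty$ it is $s_\infty=t^{-1}$. Let $B_K^\dagger$ be the ring of series $\sum_{\underline\ell\ge0}a_{\underline\ell}\,t^{\ell_0}\prod_{i}(t-\lambda_i)^{-\ell_i}$ ($a_{\underline\ell}\in K$) for which there is $\eta>1$ with $|a_{\underline\ell}|\eta^{\max_i\ell_i}\to0$; $\phi_\lambda(f)$ is the Laurent expansion of $f\in B_K^\dagger$ in $s_\lambda$.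 The principal part is $\Pr_\lambda(\sum a_\ell s_\lambda^\ell)=\sum_{\ell<0}a_\ell s_\lambda^\ell$ for $\lambda\in\Lambda_0$ and $\Pr_\infty(\sum a_\ell s_\infty^\ell)=\sum_{\ell\le0}a_\ell s_\infty^\ell$; its expansion at another point $\mu$ is denoted $\phi_\mu(\cdot)$. For $\lambda\in\Lambda_0$, $\tilde R_{\lambda,c}$ is the space of $\sum_{\ell\ge0}a_\ell s_\lambda^\ell$ with $|a_\ell|\eta^\ell\to0$ for all $\eta<1$, and $R_{\infty,c}$ the analogous space of $\sum_{\ell\ge1}a_\ell s_\infty^\ell$. $B_c=\prod_{\lambda\in\Lambda_0}\tilde R_{\lambda,c}\times R_{\infty,c}$ is a $B_K^\dagger$-module via $(f\cdot G)^\mu=\phi_\mu(f)G^\mu-\sum_{\lambda\in\Lambda}\phi_\mu\big(\Pr_\lambda(\phi_\lambda(f)G^\lambda)\big)$. Let $A_K^\dagger=B_K^\dagger\oplus B_K^\dagger Y$ with $Y^2=Q(t)$, $\nabla_{GM}(1)=0$, $\nabla_{GM}(Y)=hY$; $M_c=A_K^\dagger\otimes_{B_K^\dagger}B_c$ with elements $m_c=1\otimes G_0+Y\otimes G_1$ ($G_0,G_1\in B_c$) and $\nabla_c(m_c)=1\otimes\partial_tG_0+Y\otimes(\partial_tG_1+h\cdot G_1)$, $\partial_t$ acting componentwise (as $-s_\infty^2\,d/ds_\infty$ on series in $s_\infty$). $H=\ker\nabla_c$ (the space $H^1_{MW,c}(V,\pi_*A_K^\dagger)$). Local components: $m_\lambda=G_0^\lambda+YG_1^\lambda=\sum_{j=0,1}Y^j\sum_{\ell\ge0}b^\lambda_{j,\ell}s_\lambda^\ell$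 with $b^\infty_{j,0}=0$. *)

theory Defs
  imports Complex_Main "HOL-Computational_Algebra.Primes"
begin

text \<open>K is characterised (up to isomorphism) as a complete discretely valued field of
characteristic 0 in which p is a uniformizer (unramified) and whose residue field is finite
(of characteristic p); this is exactly Frac W(k) for the finite field k.  The valuation v
is only meaningful on nonzero elements.\<close>

definition pval_field :: "('a::field_char_0 \<Rightarrow> int) \<Rightarrow> nat \<Rightarrow> bool" where
  "pval_field v p \<longleftrightarrow> prime p \<and> odd p \<and>
     (\<forall>x y. x \<noteq> 0 \<longrightarrow> y \<noteq> 0 \<longrightarrow> v (x * y) = v x + v y) \<and>
     (\<forall>x y. x \<noteq> 0 \<longrightarrow> y \<noteq> 0 \<longrightarrow> x + y \<noteq> 0 \<longrightarrow> v (x + y) \<ge> min (v x) (v y)) \<and>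
     v (of_nat p) = 1 \<and>
     (\<forall>X::nat \<Rightarrow> 'a. (\<forall>M::int. \<exists>N. \<forall>m\<ge>N. \<forall>n\<ge>N. X m = X n \<or> v (X m - X n) \<ge> M)
        \<longrightarrow> (\<exists>L. \<forall>M::int. \<exists>N. \<forall>n\<ge>N. X n = L \<or> v (X n - L) \<ge> M)) \<and>
     (\<exists>R. finite R \<and> (\<forall>r\<in>R. r = 0 \<or> v r \<ge> 0) \<and>
        (\<forall>x. (x = 0 \<or> v x \<ge> 0) \<longrightarrow> (\<exists>r\<in>R. x = r \<or> v (x - r) \<ge> 1)))"

definition pnorm :: "('a::field_char_0 \<Rightarrow> int) \<Rightarrow> nat \<Rightarrow> 'a \<Rightarrow> real" where
  "pnorm v p x = (if x = 0 then 0 else real p powr (- real_of_int (v x)))"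

text \<open>Points: Some i stands for lambda_i (1 \<le> i \<le> N), None stands for infinity.\<close>
definition LamSet :: "nat \<Rightarrow> nat option set" where
  "LamSet N = Some ` {1..N} \<union> {None}"

text \<open>Coefficients of the expansion of (t - c)^(-k), k \<ge> 1, in the local parameter at mu.\<close>
definition inv_pow_exp :: "(nat \<Rightarrow> 'a::field_char_0) \<Rightarrow> 'a \<Rightarrow> nat \<Rightarrow> nat option \<Rightarrow> int \<Rightarrow> 'a" where
  "inv_pow_exp lam c k mu n =
    (case mu of
       None \<Rightarrow> (if n \<ge> int k then of_nat ((nat n - 1) choose (k - 1)) * c ^ (nat n - k) else 0)
     | Some j \<Rightarrow>
        (if lam j = c then (if n = - int k then 1 else 0)
         else if n \<ge> 0 then (-1) ^ nat n * of_nat ((nat n + k - 1) choose nat n) / (lam j - c) ^ (nat n + k)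
         else 0))"

text \<open>Coefficients of the expansion of t^k in the local parameter at mu.\<close>
definition poly_exp :: "(nat \<Rightarrow> 'a::field_char_0) \<Rightarrow> nat \<Rightarrow> nat option \<Rightarrow> int \<Rightarrow> 'a" where
  "poly_exp lam k mu n =
    (case mu of
       None \<Rightarrow> (if n = - int k then 1 else 0)
     | Some j \<Rightarrow> (if 0 \<le> n \<and> n \<le> int k then of_nat (k choose nat n) * lam j ^ (k - nat n) else 0))"

definition Pr :: "nat option \<Rightarrow> (int \<Rightarrow> 'a::zero) \<Rightarrow> int \<Rightarrow> 'a" where
  "Pr mu c n = (case mu of None \<Rightarrow> (if n \<le> 0 then c n else 0) | Some _ \<Rightarrow> (if n < 0 then c n else 0))"

text \<open>Expansion at mu of a (finite) principal part P taken at the point la.\<close>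
definition expand_pp :: "(nat \<Rightarrow> 'a::field_char_0) \<Rightarrow> nat option \<Rightarrow> (int \<Rightarrow> 'a) \<Rightarrow> nat option \<Rightarrow> int \<Rightarrow> 'a" where
  "expand_pp lam la P mu n =
    (case la of
       Some i \<Rightarrow> (\<Sum>k\<in>{k::nat. 1 \<le> k \<and> P (- int k) \<noteq> 0}. P (- int k) * inv_pow_exp lam (lam i) k mu n)
     | None \<Rightarrow> (\<Sum>k\<in>{k::nat. P (- int k) \<noteq> 0}. P (- int k) * poly_exp lam k mu n))"

text \<open>Product of two Laurent series both vanishing below index lb.\<close>
definition lmul :: "int \<Rightarrow> (int \<Rightarrow> 'a::comm_ring) \<Rightarrow> (int \<Rightarrow> 'a) \<Rightarrow> int \<Rightarrow> 'a" where
  "lmul lb a b n = (\<Sum>k\<in>{lb..n - lb}. a k * b (n - k))"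

text \<open>Expansion of h = Q'/(2Q) = (1/2) sum_i 1/(t - lambda_i) at mu.\<close>
definition hexp :: "(nat \<Rightarrow> 'a::field_char_0) \<Rightarrow> nat \<Rightarrow> nat option \<Rightarrow> int \<Rightarrow> 'a" where
  "hexp lam N mu n = (1/2) * (\<Sum>i\<in>{1..N}. inv_pow_exp lam (lam i) 1 mu n)"

text \<open>An element G of B_c: G mu l is the coefficient of s_mu^l (l \<ge> 0) of the component at mu.\<close>
definition lift :: "(nat option \<Rightarrow> nat \<Rightarrow> 'a::zero) \<Rightarrow> nat option \<Rightarrow> int \<Rightarrow> 'a" where
  "lift G mu n = (if n \<ge> 0 then G mu (nat n) else 0)"

definition overconv_open :: "('a::field_char_0 \<Rightarrow> int) \<Rightarrow> nat \<Rightarrow> (nat \<Rightarrow> 'a) \<Rightarrow> bool" where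
  "overconv_open v p a \<longleftrightarrow>
     (\<forall>eta::real. 0 < eta \<and> eta < 1 \<longrightarrow> (\<lambda>l. pnorm v p (a l) * eta ^ l) \<longlonglongrightarrow> 0)"

definition in_Bc :: "('a::field_char_0 \<Rightarrow> int) \<Rightarrow> nat \<Rightarrow> nat \<Rightarrow> (nat option \<Rightarrow> nat \<Rightarrow> 'a) \<Rightarrow> bool" where
  "in_Bc v p N G \<longleftrightarrow>
     (\<forall>i\<in>{1..N}. overconv_open v p (G (Some i))) \<and>
     overconv_open v p (G None) \<and> G None 0 = 0 \<and>
     (\<forall>i. i \<notin> {1..N} \<longrightarrow> G (Some i) = (\<lambda>_. 0))"

text \<open>The B_K^dagger-module action of h on B_c:
  (h.G)^mu = phi_mu(h) G^mu - sum_{la in Lambda} phi_mu(Pr_la(phi_la(h) G^la)).\<close>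
definition hact :: "(nat \<Rightarrow> 'a::field_char_0) \<Rightarrow> nat \<Rightarrow> (nat option \<Rightarrow> nat \<Rightarrow> 'a) \<Rightarrow> nat option \<Rightarrow> nat \<Rightarrow> 'a" where
  "hact lam N G mu n =
     lmul (-1) (hexp lam N mu) (lift G mu) (int n)
     - (\<Sum>la\<in>LamSet N. expand_pp lam la (Pr la (lmul (-1) (hexp lam N la) (lift G la))) mu (int n))"

text \<open>d/dt componentwise: d/ds at finite points, -s^2 d/ds at infinity.\<close>
definition deriv_t :: "nat option \<Rightarrow> (nat option \<Rightarrow> nat \<Rightarrow> 'a::field_char_0) \<Rightarrow> nat \<Rightarrow> 'a" where
  "deriv_t mu G n =
    (case mu of
       None \<Rightarrow> (if n \<ge> 2 then - of_nat (n - 1) * G None (n - 1) else 0)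
     | Some _ \<Rightarrow> of_nat (n + 1) * G mu (n + 1))"

text \<open>m_c = 1 (x) G0 + Y (x) G1 lies in H = ker nabla_c.\<close>
definition in_H :: "('a::field_char_0 \<Rightarrow> int) \<Rightarrow> nat \<Rightarrow> (nat \<Rightarrow> 'a) \<Rightarrow> nat
     \<Rightarrow> (nat option \<Rightarrow> nat \<Rightarrow> 'a) \<Rightarrow> (nat option \<Rightarrow> nat \<Rightarrow> 'a) \<Rightarrow> bool" where
  "in_H v p lam N G0 G1 \<longleftrightarrow> in_Bc v p N G0 \<and> in_Bc v p N G1 \<and>
     (\<forall>mu\<in>LamSet N. \<forall>n. deriv_t mu G0 n = 0 \<and> deriv_t mu G1 n + hact lam N G1 mu n = 0)"

end

theory Submission
  imports Defs "HOL-Computational_Algebra.Formal_Power_Series"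
begin

unbundle fps_syntax



definition ge :: "('a::field_char_0 \<Rightarrow> int) \<Rightarrow> real \<Rightarrow> 'a \<Rightarrow> bool" where
  "ge v M x \<longleftrightarrow> x = 0 \<or> M \<le> real_of_int (v x)"

locale pv =
  fixes v :: "'a::field_char_0 \<Rightarrow> int" and p :: nat
  assumes pvf: "pval_field v p"
begin

lemma prime_p: "prime p" and odd_p: "odd p"
  and vmult: "x \<noteq> 0 \<Longrightarrow> y \<noteq> 0 \<Longrightarrow> v (x * y) = v x + v y"
  and vadd: "x \<noteq> 0 \<Longrightarrow> y \<noteq> 0 \<Longrightarrow> x + y \<noteq> 0 \<Longrightarrow> v (x + y) \<ge> min (v x) (v y)"
  and vp: "v (of_nat p) = 1"
  using pvf unfolding pval_field_def by auto

lemma v1: "v 1 = 0"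
  using vmult[of 1 1] by simp

lemma vinv: "x \<noteq> 0 \<Longrightarrow> v (inverse x) = - v x"
  using vmult[of x "inverse x"] v1 by simp

lemma vm1: "v (-1) = 0"
  using vmult[of "-1" "-1"] v1 by simp

lemma vneg: "x \<noteq> 0 \<Longrightarrow> v (- x) = v x"
  using vmult[of "-1" x] vm1 by simp

lemma ge_0[simp]: "ge v M 0" by (simp add: ge_def)

lemma ge_mono: "ge v M x \<Longrightarrow> M' \<le> M \<Longrightarrow> ge v M' x"
  by (auto simp: ge_def)

lemma ge_mult: "ge v a x \<Longrightarrow> ge v b y \<Longrightarrow> ge v (a + b) (x * y)"
  by (cases "x = 0 \<or> y = 0") (auto simp: ge_def vmult)

lemma ge_neg: "ge v M x \<Longrightarrow> ge v M (- x)"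
  by (cases "x = 0") (auto simp: ge_def vneg)

lemma ge_add: "ge v M x \<Longrightarrow> ge v M y \<Longrightarrow> ge v M (x + y)"
proof -
  assume a: "ge v M x" "ge v M y"
  show ?thesis
  proof (cases "x = 0 \<or> y = 0 \<or> x + y = 0")
    case True then show ?thesis using a by auto
  next
    case False
    then have "v (x + y) \<ge> min (v x) (v y)" using vadd by auto
    then show ?thesis using a False unfolding ge_def by linarith
  qed
qed

lemma ge_diff: "ge v M x \<Longrightarrow> ge v M y \<Longrightarrow> ge v M (x - y)"
  using ge_add[of M x "- y"] ge_neg by simp

lemma ge_sum: "(\<And>i. i \<in> S \<Longrightarrow> ge v M (f i)) \<Longrightarrow> ge v M (sum f S)"
proof (induction S rule: infinite_finite_induct)
  case (insert x F) then show ?case by (simp add: ge_add)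
qed auto

lemma ge_prod: "(\<And>i. i \<in> S \<Longrightarrow> ge v 0 (f i)) \<Longrightarrow> ge v 0 (prod f S)"
proof (induction S rule: infinite_finite_induct)
  case (insert x F) then show ?case using ge_mult[of 0 "f x" 0] by simp
qed (auto simp: ge_def v1)

lemma ge_1: "ge v 0 1" by (simp add: ge_def v1)

lemma ge_pow: "ge v 0 x \<Longrightarrow> ge v 0 (x ^ n)"
  by (induction n) (auto simp: ge_1 dest: ge_mult[of 0 x 0])

lemma v_nat_nonneg: "n \<noteq> 0 \<Longrightarrow> v (of_nat n) \<ge> 0"
proof (induction n)
  case (Suc n)
  show ?case
  proof (cases "n = 0")
    case True then show ?thesis by (simp add: v1)
  next
    case False
    have ne: "of_nat n + (1::'a) \<noteq> 0"
      by (metis of_nat_Suc add.commute of_nat_eq_0_iff nat.distinct(1))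
    have "v (of_nat n + 1) \<ge> min (v (of_nat n)) (v 1)"
      by (rule vadd) (use False ne in auto)
    then show ?thesis using Suc False v1 by (simp add: add.commute)
  qed
qed simp

lemma ge_nat: "ge v 0 (of_nat n)"
  using v_nat_nonneg[of n] by (auto simp: ge_def)

lemma ge_int: "ge v 0 (of_int z)"
proof (cases "z \<ge> 0")
  case True then show ?thesis using ge_nat[of "nat z"] by simp
next
  case False then show ?thesis using ge_neg[OF ge_nat[of "nat (- z)"]] by simp
qed

lemma v_coprime: assumes "coprime m (int p)" "m \<noteq> 0" shows "v (of_int m) = 0"
proof -
  obtain x y where xy: "x * m + y * int p = 1"
    using assms(1) bezout_int[of m "int p"] by (auto simp: coprime_iff_gcd_eq_1)
  hence e: "of_int x * of_int m + of_int y * of_nat p = (1::'a)"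
    by (metis of_int_1 of_int_add of_int_mult of_int_of_nat_eq)
  have p0: "(of_nat p :: 'a) \<noteq> 0" using prime_p by (simp add: prime_gt_0_nat)
  have vm: "v (of_int m) \<ge> 0" using ge_int[of m] assms(2) by (simp add: ge_def)
  show ?thesis
  proof (cases "x = 0")
    case True
    then have "int p dvd 1" using xy by (metis add_0 mult_zero_left dvd_triv_right)
    then have "p = 1" by simp
    then show ?thesis using prime_p by simp
  next
    case xn: False
    have vx: "v (of_int x) \<ge> 0" using ge_int[of x] xn by (simp add: ge_def)
    have vxm: "v (of_int x * of_int m) = v (of_int x) + v (of_int m)"
      using xn assms(2) by (simp add: vmult)
    show ?thesis
    proof (cases "y = 0")
      case True
      then have "v (of_int x * of_int m) = 0" using e v1 by simp
      then show ?thesis using vxm vx vm by linarith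
    next
      case yn: False
      have vy: "v (of_int y * of_nat p) \<ge> 1"
        using ge_int[of y] yn vmult[of "of_int y" "of_nat p"] vp p0 by (simp add: ge_def)
      show ?thesis
      proof (rule ccontr)
        assume "v (of_int m) \<noteq> 0"
        hence "v (of_int x * of_int m) \<ge> 1" using vxm vx vm by linarith
        moreover have "v (of_int x * of_int m + of_int y * of_nat p) \<ge>
             min (v (of_int x * of_int m)) (v (of_int y * of_nat p))"
          by (rule vadd) (use xn assms(2) yn p0 e in auto)
        ultimately show False using e v1 vy by simp
      qed
    qed
  qed
qed

lemma v_two: "v (2::'a) = 0"
proof -
  have "coprime (2::nat) p" using odd_p by (intro prime_imp_coprime) auto
  then have "coprime (2::int) (int p)" by (metis coprime_int_iff of_nat_numeral)
  then show ?thesis using v_coprime[of 2] by simp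
qed

lemma v_int_le_log_aux: "nat \<bar>m\<bar> = n \<Longrightarrow> m \<noteq> 0 \<Longrightarrow>
    real_of_int (v (of_int m)) \<le> log (real p) \<bar>real_of_int m\<bar>"
proof (induction n arbitrary: m rule: less_induct)
  case (less n m)
  have p1: "real p > 1" using prime_p prime_gt_1_nat by auto
  show ?case
  proof (cases "int p dvd m")
    case True
    then obtain m' where m': "m = int p * m'" by (auto simp: dvd_def)
    have m'0: "m' \<noteq> 0" using m' less.prems by auto
    have lt: "nat \<bar>m'\<bar> < n" using less.prems m' m'0 p1
      by (auto simp: abs_mult nat_mult_distrib)
    have IH: "real_of_int (v (of_int m')) \<le> log (real p) \<bar>real_of_int m'\<bar>"
      using less.IH[OF lt refl m'0] .
    have p0: "(of_nat p :: 'a) \<noteq> 0" using p1 by simp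
    have "v (of_int m) = 1 + v (of_int m')"
      using m' vmult[of "of_nat p" "of_int m'"] p0 m'0 vp by simp
    moreover have "log (real p) \<bar>real_of_int m\<bar> = 1 + log (real p) \<bar>real_of_int m'\<bar>"
      using m' p1 m'0 by (simp add: abs_mult log_mult)
    ultimately show ?thesis using IH by simp
  next
    case False
    have pi: "prime (int p)" using prime_p by simp
    have "coprime (int p) m" using False pi by (intro prime_imp_coprime) auto
    then have "v (of_int m) = 0" using v_coprime less.prems by (simp add: coprime_commute)
    moreover have "log (real p) \<bar>real_of_int m\<bar> \<ge> 0" using p1 less.prems by simp
    ultimately show ?thesis by simp
  qed
qed

lemma v_int_le_log: assumes "m \<noteq> 0" shows "real_of_int (v (of_int m)) \<le> log (real p) \<bar>real_of_int m\<bar>"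
  using v_int_le_log_aux[OF refl assms] .

end





definition Bm :: "'a::field_char_0 \<Rightarrow> 'a fps" where
  "Bm c = Abs_fps (\<lambda>n. (-1)^n * of_nat ((2*n) choose n) * c^n / 4^n)"

definition Uc :: "'a::field_char_0 \<Rightarrow> 'a fps" where
  "Uc c = Abs_fps (\<lambda>n. (-c)^n * c)"

definition intf :: "('a::field_char_0 \<Rightarrow> int) \<Rightarrow> 'a fps \<Rightarrow> bool" where
  "intf v F \<longleftrightarrow> (\<forall>n. ge v 0 (F $ n))"

lemma cX_nth: fixes F :: "'a::comm_ring_1 fps" shows "(fps_const c * (fps_X * F)) $ n = (if n = 0 then 0 else c * F $ (n - 1))"
  by (simp only: fps_mult_left_const_nth fps_X_mult_nth) simp

lemma Uc_eq: "(1 + fps_const c * fps_X) * Uc c = fps_const c"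
proof (rule fps_ext)
  fix n
  show "((1 + fps_const c * fps_X) * Uc c) $ n = fps_const c $ n"
  proof (cases n)
    case 0 then show ?thesis by (simp add: Uc_def algebra_simps)
  next
    case (Suc m)
    have "((1 + fps_const c * fps_X) * Uc c) = Uc c + fps_const c * (fps_X * Uc c)"
      by (simp add: algebra_simps)
    then show ?thesis using Suc by (simp add: Uc_def add: cX_nth)
  qed
qed

lemma binom_id: "(n+1) * ((2*(n+1)) choose (n+1)) = 2 * (2*n+1) * ((2*n) choose n)"
proof -
  define X where "X = (2*(n+1)) choose (n+1)"
  define Y where "Y = (2*n+1) choose n"
  define Z where "Z = (2*n) choose n"
  have eq: "2*n+1+1 = 2*(n+1)" by simp
  have a: "(2*n+1+1) * Y = ((2*n+1+1) choose (n+1)) * (n+1)"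
    using Suc_times_binomial_eq[of "2*n+1" n] unfolding Y_def Suc_eq_plus1 .
  then have a': "2*(n+1) * Y = X * (n+1)" unfolding X_def by (simp only: eq)
  have le: "n \<le> 2*n+1" by simp
  have d: "2*n+1-n = n+1" by simp
  have "(2*n+1) choose n = (2*n+1) choose (2*n+1-n)" by (rule binomial_symmetric[OF le])
  also have "\<dots> = (2*n+1) choose (n+1)" by (simp only: d)
  finally have c: "(2*n+1) choose n = (2*n+1) choose (n+1)" .
  have b: "(2*n+1) * Z = ((2*n+1) choose (n+1)) * (n+1)"
    using Suc_times_binomial_eq[of "2*n" n] unfolding Z_def Suc_eq_plus1 .
  then have b': "(2*n+1) * Z = Y * (n+1)" unfolding Y_def by (simp only: c)
  have "(2 * Y) * (n+1) = X * (n+1)" using a' by (simp only: mult_ac)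
  moreover have nz: "n+1 \<noteq> (0::nat)" by simp
  ultimately have "X = 2 * Y" using mult_right_cancel[OF nz, of X "2*Y"] by metis
  then have "(n+1) * X = 2 * (Y * (n+1))" by simp
  also have "\<dots> = 2 * (2*n+1) * Z" using b' by simp
  finally show ?thesis unfolding X_def Z_def .
qed

lemma Bm_ode1: "fps_const 2 * ((1 + fps_const c * fps_X) * fps_deriv (Bm c)) = - (fps_const c * Bm c)"
proof (rule fps_ext)
  fix n
  have e: "(1 + fps_const c * fps_X) * fps_deriv (Bm c) = fps_deriv (Bm c) + fps_const c * (fps_X * fps_deriv (Bm c))"
    by (simp add: algebra_simps)
  define A :: 'a where "A = of_nat ((2*(n+1)) choose (n+1))"
  define B :: 'a where "B = of_nat ((2*n) choose n)"
  have bi: "(of_nat n + 1) * A = 2 * (2 * of_nat n + 1) * B"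
    using binom_id[of n] unfolding A_def B_def by (metis (mono_tags, lifting) of_nat_1 of_nat_add of_nat_mult of_nat_numeral)
  have b1: "Bm c $ (n+1) = (-1)^(n+1) * A * c^(n+1) / 4^(n+1)" by (simp add: Bm_def A_def)
  have b0: "Bm c $ n = (-1)^n * B * c^n / 4^n" by (simp add: Bm_def B_def)
  have lhs: "(fps_const 2 * ((1 + fps_const c * fps_X) * fps_deriv (Bm c))) $ n
     = 2 * ((of_nat n + 1) * Bm c $ (n+1) + c * of_nat n * Bm c $ n)"
    unfolding e by (cases n) (simp_all add: cX_nth algebra_simps)
  have "2 * ((of_nat n + 1) * ((-1)^(n+1) * A * c^(n+1) / 4^(n+1)) + c * of_nat n * ((-1)^n * B * c^n / 4^n))
      = - (c * ((-1)^n * B * c^n / (4::'a)^n))"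
  proof -
    define D :: 'a where "D = (-1)^n * c^n * B / 4^n"
    have "2 * ((of_nat n + 1) * ((-1)^(n+1) * A * c^(n+1) / 4^(n+1)))
        = - (((-1)^n * c^(n+1) / 4^n) * (((of_nat n + 1) * A) / 2))"
      by (simp add: field_simps)
    also have "\<dots> = - (((-1)^n * c^(n+1) / 4^n) * ((2 * of_nat n + 1) * B))"
    proof -
      have "((of_nat n + 1) * A) / 2 = (2 * of_nat n + 1) * (B::'a)" using bi by simp
      then show ?thesis by (simp only:)
    qed
    also have "\<dots> = - (c * D * (2 * of_nat n + 1))"
      by (simp add: D_def field_simps)
    finally have t1: "2 * ((of_nat n + 1) * ((-1)^(n+1) * A * c^(n+1) / 4^(n+1))) = - (c * D * (2 * of_nat n + 1))" .
    have t2: "2 * (c * of_nat n * ((-1)^n * B * c^n / 4^n)) = 2 * c * of_nat n * D"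
      by (simp add: D_def field_simps)
    have t3: "- (c * ((-1)^n * B * c^n / (4::'a)^n)) = - (c * D)"
      by (simp add: D_def field_simps)
    show ?thesis unfolding distrib_left t1 t2 t3 by (simp add: algebra_simps)
  qed
  note key = this
  have "(fps_const 2 * ((1 + fps_const c * fps_X) * fps_deriv (Bm c))) $ n
     = 2 * ((of_nat n + 1) * Bm c $ (n+1) + c * of_nat n * Bm c $ n)" by (rule lhs)
  also have "\<dots> = 2 * ((of_nat n + 1) * ((-1)^(n+1) * A * c^(n+1) / 4^(n+1)) + c * of_nat n * ((-1)^n * B * c^n / 4^n))"
    by (simp only: b1 b0)
  also note key
  also have "- (c * ((-1)^n * B * c^n / (4::'a)^n)) = (- (fps_const c * Bm c)) $ n"
    by (simp add: b0)
  finally show "(fps_const 2 * ((1 + fps_const c * fps_X) * fps_deriv (Bm c))) $ n = (- (fps_const c * Bm c)) $ n" .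
qed

lemma Bm_ode: "fps_const 2 * fps_deriv (Bm c) = - (Uc c * Bm c)"
proof -
  have "(1 + fps_const c * fps_X) * (fps_const 2 * fps_deriv (Bm c) + Uc c * Bm c) = 0"
  proof -
    have "(1 + fps_const c * fps_X) * (fps_const 2 * fps_deriv (Bm c) + Uc c * Bm c)
       = fps_const 2 * ((1 + fps_const c * fps_X) * fps_deriv (Bm c)) + ((1 + fps_const c * fps_X) * Uc c) * Bm c"
      by (simp add: algebra_simps)
    also have "\<dots> = 0" by (simp add: Bm_ode1 Uc_eq)
    finally show ?thesis .
  qed
  moreover have "(1 + fps_const c * fps_X) \<noteq> (0::'a fps)"
  proof
    assume "(1 + fps_const c * fps_X) = (0::'a fps)"
    then have "(1 + fps_const c * fps_X) $ 0 = (0::'a fps) $ 0" by simp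
    then show False by simp
  qed
  ultimately have "fps_const 2 * fps_deriv (Bm c) + Uc c * Bm c = 0" by simp
  then show ?thesis by (simp add: eq_neg_iff_add_eq_0)
qed

lemma Bm_0[simp]: "Bm c $ 0 = 1" by (simp add: Bm_def)

definition Wi :: "'b set \<Rightarrow> ('b \<Rightarrow> 'a::field_char_0) \<Rightarrow> 'a fps" where
  "Wi S c = (\<Prod>i\<in>S. Bm (c i))"

lemma Wi_ode: "finite S \<Longrightarrow> fps_const 2 * fps_deriv (Wi S c) = - ((\<Sum>i\<in>S. Uc (c i)) * Wi S c)"
proof (induction S rule: finite_induct)
  case empty then show ?case by (simp add: Wi_def)
next
  case (insert x F)
  have "Wi (insert x F) c = Bm (c x) * Wi F c" using insert by (simp add: Wi_def)
  moreover have "fps_const 2 * fps_deriv (Bm (c x) * Wi F c)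
      = Bm (c x) * (fps_const 2 * fps_deriv (Wi F c)) + (fps_const 2 * fps_deriv (Bm (c x))) * Wi F c"
    by (simp add: algebra_simps)
  ultimately show ?case using insert by (simp add: Bm_ode algebra_simps)
qed

lemma Wi_0: "Wi S c $ 0 = 1"
proof (induction S rule: infinite_finite_induct)
  case (insert x F) then show ?case by (simp add: Wi_def)
qed (auto simp: Wi_def)

lemma ode_transform:
  fixes W U f T :: "'a::field_char_0 fps"
  assumes "fps_const 2 * fps_deriv W = U * W"
    and "fps_const 2 * (fps_X * fps_deriv f) + fps_const a * f + fps_X * U * f = T"
  shows "fps_const 2 * (fps_X * fps_deriv (W * f)) + fps_const a * (W * f) = W * T"
proof -
  have "fps_const 2 * (fps_X * fps_deriv (W * f)) + fps_const a * (W * f)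
      = W * (fps_const 2 * (fps_X * fps_deriv f) + fps_const a * f) + fps_X * (fps_const 2 * fps_deriv W) * f"
    by (simp add: algebra_simps)
  also have "\<dots> = W * (fps_const 2 * (fps_X * fps_deriv f) + fps_const a * f + fps_X * U * f)"
    using assms(1) by (simp add: algebra_simps)
  finally show ?thesis using assms(2) by simp
qed

lemma ode_coeff:
  "(fps_const 2 * (fps_X * fps_deriv g) + fps_const a * g) $ n = (2 * of_nat n + a) * g $ n"
  by (cases n) (simp_all add: algebra_simps)

context pv
begin

lemma ge_inv2: "ge v 0 (inverse (2::'a))"
  using vinv[of 2] v_two by (simp add: ge_def)

lemma ge_inv4: "ge v 0 (inverse (4::'a))"
proof -
  have "v (4::'a) = 0" using vmult[of 2 2] v_two by simp
  then show ?thesis using vinv[of 4] by (simp add: ge_def)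
qed

lemma intf_Bm: assumes c: "ge v 0 c" shows "intf v (Bm c)"
proof -
  have g: "ge v 0 ((-1)^n * of_nat ((2*n) choose n) * c^n * (inverse 4)^n)" for n
    using ge_mult[OF ge_mult[OF ge_mult[OF ge_pow[OF ge_neg[OF ge_1], of n] ge_nat] ge_pow[OF c]] ge_pow[OF ge_inv4]]
    by simp
  have e: "Bm c $ n = (-1)^n * of_nat ((2*n) choose n) * c^n * (inverse 4)^n" for n
    unfolding Bm_def fps_nth_Abs_fps divide_inverse power_inverse ..
  show ?thesis unfolding intf_def e using g by blast
qed

lemma intf_Uc: assumes c: "ge v 0 c" shows "intf v (Uc c)"
proof -
  have "ge v 0 ((-c)^n * c)" for n using ge_mult[OF ge_pow[OF ge_neg[OF c]] c] by simp
  then show ?thesis unfolding intf_def Uc_def by simp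
qed

lemma intf_mult: "intf v F \<Longrightarrow> intf v G \<Longrightarrow> intf v (F * G)"
  unfolding intf_def fps_mult_nth using ge_mult[of 0 _ 0] by (auto intro!: ge_sum)

lemma intf_one: "intf v 1"
  unfolding intf_def by (simp add: ge_1)

lemma intf_prod: "(\<And>i. i \<in> S \<Longrightarrow> intf v (f i)) \<Longrightarrow> intf v (prod f S)"
proof (induction S rule: infinite_finite_induct)
  case (insert x F) then show ?case by (simp add: intf_mult)
qed (auto simp: intf_one)

lemma intf_Wi: "(\<And>i. i \<in> S \<Longrightarrow> ge v 0 (c i)) \<Longrightarrow> intf v (Wi S c)"
  unfolding Wi_def by (intro intf_prod intf_Bm) auto

lemma intf_inverse: assumes F: "intf v F" and F0: "F $ 0 = 1" shows "intf v (inverse F)"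
proof -
  have "ge v 0 (fps_right_inverse_constructor F 1 n)" for n
  proof (induction n rule: less_induct)
    case (less n)
    show ?case
    proof (cases n)
      case 0 then show ?thesis by (simp add: ge_1)
    next
      case (Suc m)
      have "ge v 0 (sum (\<lambda>i. F$i * fps_right_inverse_constructor F 1 (n - i)) {1..n})"
      proof (rule ge_sum)
        fix i assume "i \<in> {1..n}"
        then have "n - i < n" by auto
        from ge_mult[OF _ less.IH[OF this], of 0 "F$i"] F show "ge v 0 (F$i * fps_right_inverse_constructor F 1 (n - i))"
          unfolding intf_def by (simp del: fps_right_inverse_constructor.simps)
      qed
      then have "ge v 0 (- 1 * sum (\<lambda>i. F$i * fps_right_inverse_constructor F 1 (n - i)) {1..n})"
        using ge_neg by (metis mult_minus1)
      moreover have "fps_right_inverse_constructor F 1 (Suc m) = - 1 * sum (\<lambda>i. F$i * fps_right_inverse_constructor F 1 (Suc m - i)) {1..Suc m}"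
        by (rule fps_right_inverse_constructor.simps(2))
      ultimately show ?thesis using Suc by (simp only:)
    qed
  qed
  then show ?thesis unfolding intf_def fps_inverse_def using F0
    by (simp del: fps_right_inverse_constructor.simps)
qed

end





lemma lmul_split:
  fixes a b :: "int \<Rightarrow> 'a::comm_ring"
  assumes b: "\<And>m. m < 0 \<Longrightarrow> b m = 0"
  shows "lmul (-1) a b (int n) = a (-1) * b (int n + 1) + (\<Sum>i=0..n. a (int i) * b (int (n - i)))"
proof -
  have S: "{-1..int n - (-1)} = insert (-1) (insert (int n + 1) (int ` {0..n}))"
  proof (rule set_eqI)
    fix x :: int
    show "x \<in> {-1..int n - (-1)} \<longleftrightarrow> x \<in> insert (-1) (insert (int n + 1) (int ` {0..n}))"
    proof
      assume x: "x \<in> {-1..int n - (-1)}"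
      show "x \<in> insert (-1) (insert (int n + 1) (int ` {0..n}))"
      proof (cases "x = -1 \<or> x = int n + 1")
        case True then show ?thesis by auto
      next
        case False
        then have "x = int (nat x)" "nat x \<in> {0..n}" using x by auto
        then show ?thesis by blast
      qed
    qed auto
  qed
  have "lmul (-1) a b (int n) = (\<Sum>k\<in>insert (-1) (insert (int n + 1) (int ` {0..n})). a k * b (int n - k))"
    unfolding lmul_def S ..
  also have "\<dots> = a (-1) * b (int n + 1) + (a (int n + 1) * b (-1) + (\<Sum>k\<in>int ` {0..n}. a k * b (int n - k)))"
    by (subst sum.insert, force, force, subst sum.insert, force, force) simp
  also have "(\<Sum>k\<in>int ` {0..n}. a k * b (int n - k)) = (\<Sum>i=0..n. a (int i) * b (int (n - i)))"
    by (subst sum.reindex) (auto simp: of_nat_diff)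
  finally show ?thesis using b[of "-1"] by simp
qed

lemma lmul_m1:
  fixes a b :: "int \<Rightarrow> 'a::comm_ring"
  assumes b: "\<And>m. m < 0 \<Longrightarrow> b m = 0"
  shows "lmul (-1) a b (-1) = a (-1) * b 0"
proof -
  have "{-1..(-1::int) - (-1)} = {-1, 0}" by auto
  then show ?thesis unfolding lmul_def using b[of "-1"] by simp
qed

lemma lmul_le_m2:
  fixes a b :: "int \<Rightarrow> 'a::comm_ring"
  assumes b: "\<And>m. m < 0 \<Longrightarrow> b m = 0" and n: "n \<le> -2"
  shows "lmul (-1) a b n = 0"
  unfolding lmul_def using b n by (intro sum.neutral) auto

lemma lift_neg: "m < 0 \<Longrightarrow> lift G mu m = 0"
  by (simp add: lift_def)

lemma lift_nat[simp]: "lift G mu (int n) = G mu n"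
  by (simp add: lift_def)

lemma pow_inv_aux:
  fixes d :: "'a::field_char_0"
  shows "(-1)^k / d^(k+1) = (- inverse d)^k * inverse d"
proof -
  have "(-1)^k / d^(k+1) = (-1)^k * (inverse d)^(k+1)" by (simp add: divide_inverse power_inverse)
  also have "\<dots> = ((-1)^k * (inverse d)^k) * inverse d" by (simp only: power_Suc2 add.commute[of k 1] plus_1_eq_Suc mult.assoc)
  also have "\<dots> = (- inverse d)^k * inverse d"
    by (rule arg_cong[where f="\<lambda>x. x * inverse d"], rule power_minus[symmetric])
  finally show ?thesis .
qed

lemma ipe_Some_ne:
  fixes lam :: "nat \<Rightarrow> 'a::field_char_0"
  assumes "lam j \<noteq> c"
  shows "inv_pow_exp lam c 1 (Some j) (int k) = Uc (inverse (lam j - c)) $ k"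
proof -
  have "inv_pow_exp lam c 1 (Some j) (int k) = (-1)^k / (lam j - c)^(k+1)"
    using assms unfolding inv_pow_exp_def by simp
  also have "\<dots> = Uc (inverse (lam j - c)) $ k" unfolding Uc_def fps_nth_Abs_fps by (rule pow_inv_aux)
  finally show ?thesis .
qed

lemma ipe_Some_eq: "inv_pow_exp lam (lam j) 1 (Some j) (int k) = 0"
  unfolding inv_pow_exp_def by simp

lemma ipe_Some_m1: "inv_pow_exp lam c 1 (Some j) (-1) = (if lam j = c then 1 else 0)"
  unfolding inv_pow_exp_def by simp

lemma ipe_None: "inv_pow_exp lam c 1 None (int k) = (if k \<ge> 1 then c^(k-1) else 0)"
  unfolding inv_pow_exp_def by simp

lemma ipe_None_nonpos: "n \<le> 0 \<Longrightarrow> inv_pow_exp lam c 1 None n = 0"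
  unfolding inv_pow_exp_def by simp

definition Utot :: "(nat \<Rightarrow> 'a::field_char_0) \<Rightarrow> nat \<Rightarrow> nat \<Rightarrow> 'a fps" where
  "Utot lam N j = (\<Sum>i\<in>{1..N}-{j}. Uc (inverse (lam j - lam i)))"

lemma hexp_Some:
  fixes lam :: "nat \<Rightarrow> 'a::field_char_0"
  assumes j: "j \<in> {1..N}" and dist: "\<And>i. i \<in> {1..N} \<Longrightarrow> i \<noteq> j \<Longrightarrow> lam i \<noteq> lam j"
  shows "hexp lam N (Some j) (int k) = (1/2) * Utot lam N j $ k"
proof -
  have "(\<Sum>i\<in>{1..N}. inv_pow_exp lam (lam i) 1 (Some j) (int k))
      = inv_pow_exp lam (lam j) 1 (Some j) (int k) + (\<Sum>i\<in>{1..N}-{j}. inv_pow_exp lam (lam i) 1 (Some j) (int k))"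
    using j by (rule sum.remove[rotated]) simp
  also have "\<dots> = (\<Sum>i\<in>{1..N}-{j}. Uc (inverse (lam j - lam i)) $ k)"
    unfolding ipe_Some_eq add_0
    by (rule sum.cong[OF refl], rule ipe_Some_ne) (metis dist DiffE singletonI)
  finally show ?thesis unfolding hexp_def Utot_def fps_sum_nth by simp
qed

lemma hexp_Some_m1:
  fixes lam :: "nat \<Rightarrow> 'a::field_char_0"
  assumes j: "j \<in> {1..N}" and dist: "\<And>i. i \<in> {1..N} \<Longrightarrow> i \<noteq> j \<Longrightarrow> lam i \<noteq> lam j"
  shows "hexp lam N (Some j) (-1) = 1/2"
proof -
  have "(\<Sum>i\<in>{1..N}. inv_pow_exp lam (lam i) 1 (Some j) (-1))
      = inv_pow_exp lam (lam j) 1 (Some j) (-1) + (\<Sum>i\<in>{1..N}-{j}. inv_pow_exp lam (lam i) 1 (Some j) (-1))"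
    using j by (rule sum.remove[rotated]) simp
  also have "\<dots> = 1"
  proof -
    have "(\<Sum>i\<in>{1..N}-{j}. inv_pow_exp lam (lam i) 1 (Some j) (-1)) = 0"
    proof (rule sum.neutral, rule ballI)
      fix i assume "i \<in> {1..N}-{j}"
      then have "lam j \<noteq> lam i" using dist by (metis DiffE singletonI)
      then show "inv_pow_exp lam (lam i) 1 (Some j) (-1) = 0" by (subst ipe_Some_m1) simp
    qed
    then show ?thesis by (subst ipe_Some_m1) simp
  qed
  finally show ?thesis unfolding hexp_def by simp
qed

lemma hexp_None_nonpos: "n \<le> 0 \<Longrightarrow> hexp lam N None n = 0"
proof -
  assume n: "n \<le> 0"
  have "(\<Sum>i\<in>{1..N}. inv_pow_exp lam (lam i) 1 None n) = 0"
    by (rule sum.neutral) (use n ipe_None_nonpos in blast)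
  then show ?thesis unfolding hexp_def by simp
qed

lemma expand_Some_single:
  fixes P :: "int \<Rightarrow> 'a::field_char_0"
  assumes "\<And>k. k \<ge> 2 \<Longrightarrow> P (- int k) = 0"
  shows "expand_pp lam (Some i) P mu n = P (-1) * inv_pow_exp lam (lam i) 1 mu n"
proof -
  have sub: "{k::nat. 1 \<le> k \<and> P (- int k) \<noteq> 0} \<subseteq> {1}"
    using assms by (auto simp: not_less_eq_eq) (metis One_nat_def le_antisym not_less_eq_eq numeral_2_eq_2)
  have "(\<Sum>k\<in>{k::nat. 1 \<le> k \<and> P (- int k) \<noteq> 0}. P (- int k) * inv_pow_exp lam (lam i) k mu n)
      = (\<Sum>k\<in>{1}. P (- int k) * inv_pow_exp lam (lam i) k mu n)"
    by (rule sum.mono_neutral_left) (use sub in auto)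
  then show ?thesis unfolding expand_pp_def by simp
qed

lemma expand_None_zero:
  fixes P :: "int \<Rightarrow> 'a::field_char_0"
  assumes "\<And>k. P (- int k) = 0"
  shows "expand_pp lam None P mu n = 0"
  unfolding expand_pp_def using assms by simp

context pv
begin

lemma p_gt1: "real p > 1" using prime_p prime_gt_1_nat by auto

lemma ge_mult_intf: "intf v F \<Longrightarrow> (\<And>n. ge v M (G $ n)) \<Longrightarrow> ge v M ((F * G) $ n)"
  unfolding intf_def fps_mult_nth using ge_mult[of 0 _ M] by (auto intro!: ge_sum)

lemma final_bound:
  fixes Winv W f T :: "'a fps" and a0 :: int and B :: real
  assumes Wi: "intf v Winv" and Wint: "intf v W" and WW: "Winv * W = 1"
    and odd: "odd a0"
    and Tb: "\<And>n. ge v (-B) (T $ n)"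
    and eq: "\<And>n. (2 * of_nat n + of_int a0) * (W * f) $ n = (W * T) $ n"
    and n1: "n \<ge> 1"
  shows "ge v (-(log (real p) (real n) + (B + log (real p) (2 * (2 + \<bar>real_of_int a0\<bar>))))) (f $ n)"
proof -
  define K :: real where "K = 2 + \<bar>real_of_int a0\<bar>"
  have K2: "K \<ge> 2" unfolding K_def by simp
  have p1: "real p > 1" by (rule p_gt1)
  have WT: "ge v (-B) ((W * T) $ m)" for m
    by (rule ge_mult_intf[OF Wint Tb])
  have gb: "ge v (-B - log (real p) (K * (real m + 1))) ((W * f) $ m)" for m
  proof -
    define k :: int where "k = 2 * int m + a0"
    have k0: "k \<noteq> 0" unfolding k_def using odd by presburger
    have keq: "of_int k * (W * f) $ m = (W * T) $ m" using eq[of m] unfolding k_def by simp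
    show ?thesis
    proof (cases "(W * f) $ m = 0")
      case True then show ?thesis by simp
    next
      case False
      have kne: "(of_int k :: 'a) \<noteq> 0" using k0 by simp
      have WTne: "(W * T) $ m \<noteq> 0" using keq False kne by auto
      have "v ((W * T) $ m) = v (of_int k) + v ((W * f) $ m)"
        using keq vmult[OF kne False] by simp
      moreover have "real_of_int (v (of_int k :: 'a)) \<le> log (real p) \<bar>real_of_int k\<bar>"
        by (rule v_int_le_log[OF k0])
      moreover have "log (real p) \<bar>real_of_int k\<bar> \<le> log (real p) (K * (real m + 1))"
      proof -
        have t: "\<bar>real_of_int a0 + real m * 2\<bar> \<le> \<bar>real_of_int a0\<bar> + \<bar>real m * 2\<bar>"
          by (rule abs_triangle_ineq)
        have "0 \<le> real m * \<bar>real_of_int a0\<bar>" by simp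
        moreover have "\<bar>real m * 2\<bar> = real m * 2" by simp
        moreover have "real_of_int k = real_of_int a0 + real m * 2" unfolding k_def by simp
        moreover have "K * (real m + 1) = \<bar>real_of_int a0\<bar> + (2 + (real m * \<bar>real_of_int a0\<bar> + real m * 2))"
          unfolding K_def by (simp add: algebra_simps)
        ultimately have "\<bar>real_of_int k\<bar> \<le> K * (real m + 1)"
          using t by linarith
        moreover have "\<bar>real_of_int k\<bar> > 0" using k0 by simp
        ultimately show ?thesis using p1 by simp
      qed
      moreover have "-B \<le> real_of_int (v ((W * T) $ m))" using WT[of m] WTne by (simp add: ge_def)
      ultimately show ?thesis using False unfolding ge_def by linarith
    qed
  qed
  have feq: "f = Winv * (W * f)" using WW by (simp add: mult.assoc[symmetric])
  have "ge v (-B - log (real p) (K * (real n + 1))) ((Winv * (W * f)) $ n)"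
    unfolding fps_mult_nth[of Winv "W * f"]
  proof (rule ge_sum)
    fix i assume i: "i \<in> {0..n}"
    have "log (real p) (K * (real (n - i) + 1)) \<le> log (real p) (K * (real n + 1))"
      using p1 K2 i by (auto intro!: mult_left_mono)
    then have "ge v (-B - log (real p) (K * (real n + 1))) ((W * f) $ (n - i))"
      using gb[of "n - i"] by (intro ge_mono[OF gb[of "n - i"]]) linarith
    then show "ge v (-B - log (real p) (K * (real n + 1))) (Winv $ i * (W * f) $ (n - i))"
      using ge_mult[of 0 "Winv $ i"] Wi unfolding intf_def by fastforce
  qed
  moreover have "log (real p) (K * (real n + 1)) \<le> log (real p) (real n) + log (real p) (2 * K)"
  proof -
    have "K * (real n + 1) \<le> (2 * K) * real n" using n1 K2 by (simp add: algebra_simps)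
    then have "log (real p) (K * (real n + 1)) \<le> log (real p) ((2 * K) * real n)"
      using p1 K2 n1 by simp
    also have "\<dots> = log (real p) (2 * K) + log (real p) (real n)"
      using p1 K2 n1 by (simp add: log_mult)
    finally show ?thesis by simp
  qed
  ultimately show ?thesis using feq unfolding K_def by (auto elim!: ge_mono)
qed

end





lemma sum_LamSet: "(\<Sum>la\<in>LamSet N. F la) = (\<Sum>i\<in>{1..N}. F (Some i)) + F None"
proof -
  have "(\<Sum>la\<in>LamSet N. F la) = (\<Sum>la\<in>Some ` {1..N}. F la) + (\<Sum>la\<in>{None}. F la)"
    unfolding LamSet_def by (rule sum.union_disjoint) auto
  also have "(\<Sum>la\<in>Some ` {1..N}. F la) = (\<Sum>i\<in>{1..N}. F (Some i))"
    by (subst sum.reindex) (simp_all add: inj_on_def)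
  finally show ?thesis by simp
qed

definition distinct_lam :: "(nat \<Rightarrow> 'a) \<Rightarrow> nat \<Rightarrow> bool" where
  "distinct_lam lam N \<longleftrightarrow> (\<forall>i\<in>{1..N}. \<forall>j\<in>{1..N}. i \<noteq> j \<longrightarrow> lam i \<noteq> lam j)"

lemma Pr_Some_neg: "n < 0 \<Longrightarrow> Pr (Some i) c n = c n"
  by (simp add: Pr_def)

lemma Pr_None_nonpos: "n \<le> 0 \<Longrightarrow> Pr None c n = c n"
  by (simp add: Pr_def)

lemma expand_Some_term:
  fixes lam :: "nat \<Rightarrow> 'a::field_char_0"
  assumes i: "i \<in> {1..N}" and dl: "distinct_lam lam N"
  shows "expand_pp lam (Some i) (Pr (Some i) (lmul (-1) (hexp lam N (Some i)) (lift G (Some i)))) mu n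
       = (1/2 * G (Some i) 0) * inv_pow_exp lam (lam i) 1 mu n"
proof -
  have dist: "\<And>k. k \<in> {1..N} \<Longrightarrow> k \<noteq> i \<Longrightarrow> lam k \<noteq> lam i" using dl i unfolding distinct_lam_def by blast
  let ?P = "Pr (Some i) (lmul (-1) (hexp lam N (Some i)) (lift G (Some i)))"
  have z: "?P (- int k) = 0" if "k \<ge> 2" for k
  proof -
    have "?P (- int k) = lmul (-1) (hexp lam N (Some i)) (lift G (Some i)) (- int k)"
      using that by (simp add: Pr_Some_neg)
    also have "\<dots> = 0" by (rule lmul_le_m2) (use that lift_neg in auto)
    finally show ?thesis .
  qed
  have m1: "?P (-1) = 1/2 * G (Some i) 0"
  proof -
    have "?P (-1) = lmul (-1) (hexp lam N (Some i)) (lift G (Some i)) (-1)"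
      by (simp add: Pr_Some_neg)
    also have "\<dots> = hexp lam N (Some i) (-1) * lift G (Some i) 0"
      by (rule lmul_m1) (rule lift_neg)
    also have "\<dots> = 1/2 * G (Some i) 0"
      using hexp_Some_m1[of i N lam, OF i dist] lift_nat[of G "Some i" 0] by simp
    finally show ?thesis .
  qed
  show ?thesis using expand_Some_single[of ?P lam i mu n, OF z] m1 by simp
qed

lemma expand_None_term:
  fixes lam :: "nat \<Rightarrow> 'a::field_char_0"
  shows "expand_pp lam None (Pr None (lmul (-1) (hexp lam N None) (lift G None))) mu n = 0"
proof (rule expand_None_zero)
  fix k :: nat
  have "Pr None (lmul (-1) (hexp lam N None) (lift G None)) (- int k)
      = lmul (-1) (hexp lam N None) (lift G None) (- int k)"
    by (simp add: Pr_None_nonpos)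
  also have "\<dots> = 0" unfolding lmul_def
  proof (rule sum.neutral, rule ballI)
    fix x assume "x \<in> {-1..- int k - -1}"
    show "hexp lam N None x * lift G None (- int k - x) = 0"
    proof (cases "x \<le> 0")
      case True then show ?thesis by (simp add: hexp_None_nonpos)
    next
      case False then show ?thesis by (simp add: lift_neg)
    qed
  qed
  finally show "Pr None (lmul (-1) (hexp lam N None) (lift G None)) (- int k) = 0" .
qed

lemma hact_eq:
  fixes lam :: "nat \<Rightarrow> 'a::field_char_0"
  assumes dl: "distinct_lam lam N"
  shows "hact lam N G mu n = lmul (-1) (hexp lam N mu) (lift G mu) (int n)
     - (\<Sum>i\<in>{1..N}. (1/2 * G (Some i) 0) * inv_pow_exp lam (lam i) 1 mu (int n))"
proof -
  have "(\<Sum>la\<in>LamSet N. expand_pp lam la (Pr la (lmul (-1) (hexp lam N la) (lift G la))) mu (int n))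
      = (\<Sum>i\<in>{1..N}. (1/2 * G (Some i) 0) * inv_pow_exp lam (lam i) 1 mu (int n))"
    unfolding sum_LamSet expand_None_term add_0_right
    by (rule sum.cong[OF refl], rule expand_Some_term[OF _ dl])
  then show ?thesis unfolding hact_def by simp
qed


lemma fin_eq:
  fixes lam :: "nat \<Rightarrow> 'a::field_char_0" and G :: "nat option \<Rightarrow> nat \<Rightarrow> 'a"
  assumes j: "j \<in> {1..N}" and dl: "distinct_lam lam N"
    and ode: "\<And>n. deriv_t (Some j) G n + hact lam N G (Some j) n = 0"
  shows "fps_const 2 * (fps_X * fps_deriv (Abs_fps (G (Some j)))) + fps_const 1 * Abs_fps (G (Some j))
       + fps_X * Utot lam N j * Abs_fps (G (Some j))
     = fps_const (G (Some j) 0) + fps_X * (\<Sum>i\<in>{1..N}-{j}. fps_const (G (Some i) 0) * Uc (inverse (lam j - lam i)))"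
    (is "?L = ?R")
proof -
  define f where "f = Abs_fps (G (Some j))"
  define E where "E = (\<Sum>i\<in>{1..N}-{j}. fps_const (G (Some i) 0) * Uc (inverse (lam j - lam i)))"
  define U where "U = Utot lam N j"
  have dist: "\<And>k. k \<in> {1..N} \<Longrightarrow> k \<noteq> j \<Longrightarrow> lam k \<noteq> lam j" using dl j unfolding distinct_lam_def by blast
  have L: "lmul (-1) (hexp lam N (Some j)) (lift G (Some j)) (int n) = 1/2 * G (Some j) (n+1) + 1/2 * (U * f) $ n" for n
  proof -
    have "lmul (-1) (hexp lam N (Some j)) (lift G (Some j)) (int n)
        = hexp lam N (Some j) (-1) * lift G (Some j) (int n + 1)
          + (\<Sum>i=0..n. hexp lam N (Some j) (int i) * lift G (Some j) (int (n - i)))"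
      by (rule lmul_split) (rule lift_neg)
    also have "hexp lam N (Some j) (-1) = 1/2" by (rule hexp_Some_m1[of j N lam, OF j dist])
    also have "lift G (Some j) (int n + 1) = G (Some j) (n+1)"
    proof -
      have "int n + 1 = int (n+1)" by simp
      then show ?thesis by (simp only: lift_nat)
    qed
    also have "(\<Sum>i=0..n. hexp lam N (Some j) (int i) * lift G (Some j) (int (n - i)))
        = (\<Sum>i=0..n. 1/2 * (U $ i * f $ (n - i)))"
    proof (rule sum.cong[OF refl])
      fix i assume "i \<in> {0..n}"
      have h: "hexp lam N (Some j) (int i) = 1/2 * U $ i"
        unfolding U_def by (rule hexp_Some[of j N lam, OF j dist])
      have l: "lift G (Some j) (int (n - i)) = f $ (n - i)" unfolding f_def by simp
      show "hexp lam N (Some j) (int i) * lift G (Some j) (int (n - i)) = 1/2 * (U $ i * f $ (n - i))"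
        unfolding h l by simp
    qed
    also have "\<dots> = 1/2 * (U * f) $ n" by (simp add: fps_mult_nth sum_distrib_left)
    finally show ?thesis .
  qed
  have R: "(\<Sum>i\<in>{1..N}. (1/2 * G (Some i) 0) * inv_pow_exp lam (lam i) 1 (Some j) (int n)) = 1/2 * E $ n" for n
  proof -
    have "(\<Sum>i\<in>{1..N}. (1/2 * G (Some i) 0) * inv_pow_exp lam (lam i) 1 (Some j) (int n))
       = (1/2 * G (Some j) 0) * inv_pow_exp lam (lam j) 1 (Some j) (int n)
         + (\<Sum>i\<in>{1..N}-{j}. (1/2 * G (Some i) 0) * inv_pow_exp lam (lam i) 1 (Some j) (int n))"
      using j by (rule sum.remove[rotated]) simp
    also have "inv_pow_exp lam (lam j) 1 (Some j) (int n) = 0" by (rule ipe_Some_eq)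
    also have "(\<Sum>i\<in>{1..N}-{j}. (1/2 * G (Some i) 0) * inv_pow_exp lam (lam i) 1 (Some j) (int n))
       = (\<Sum>i\<in>{1..N}-{j}. 1/2 * (G (Some i) 0 * Uc (inverse (lam j - lam i)) $ n))"
    proof (rule sum.cong[OF refl])
      fix i assume "i \<in> {1..N}-{j}"
      then have "lam j \<noteq> lam i" using dist by (metis DiffE singletonI)
      then show "(1/2 * G (Some i) 0) * inv_pow_exp lam (lam i) 1 (Some j) (int n)
          = 1/2 * (G (Some i) 0 * Uc (inverse (lam j - lam i)) $ n)"
        by (subst ipe_Some_ne) simp_all
    qed
    also have "\<dots> = 1/2 * E $ n" unfolding E_def fps_sum_nth by (simp add: sum_distrib_left)
    finally show ?thesis by simp
  qed
  have "?L = fps_const 2 * (fps_X * fps_deriv f) + fps_const 1 * f + fps_X * (U * f)"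
    unfolding f_def U_def by (simp add: mult.assoc)
  also have "\<dots> = fps_const (f $ 0) + fps_X * E"
  proof (rule fps_ext)
    fix m
    show "(fps_const 2 * (fps_X * fps_deriv f) + fps_const 1 * f + fps_X * (U * f)) $ m = (fps_const (f $ 0) + fps_X * E) $ m"
    proof (cases m)
      case 0 then show ?thesis by simp
    next
      case (Suc n)
      have o: "deriv_t (Some j) G n + hact lam N G (Some j) n = 0" by (rule ode)
      have D: "deriv_t (Some j) G n = of_nat (n+1) * G (Some j) (n+1)" by (simp add: deriv_t_def)
      have e0: "of_nat (n+1) * G (Some j) (n+1) + (1/2 * G (Some j) (n+1) + 1/2 * (U * f) $ n - 1/2 * E $ n) = 0"
        using o unfolding hact_eq[OF dl] L R D .
      have fa: "f $ (n+1) = G (Some j) (n+1)" unfolding f_def by simp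
      have ident: "2 * (of_nat (n+1) * G (Some j) (n+1) + (1/2 * G (Some j) (n+1) + 1/2 * (U * f) $ n - 1/2 * E $ n))
         = 2 * (of_nat (n+1) * G (Some j) (n+1)) + G (Some j) (n+1) + (U * f) $ n - E $ n"
        by (simp add: algebra_simps)
      have "2 * (of_nat (n+1) * G (Some j) (n+1)) + G (Some j) (n+1) + (U * f) $ n - E $ n = 0"
        by (metis ident e0 mult_zero_right)
      then have "2 * (of_nat (n+1) * f $ (n+1)) + f $ (n+1) + (U * f) $ n = E $ n"
        unfolding fa by (simp only: right_minus_eq)
      then show ?thesis using Suc by (simp add: algebra_simps)
    qed
  qed
  finally show ?thesis unfolding f_def E_def by simp
qed


lemma hexp_None_nat:
  fixes lam :: "nat \<Rightarrow> 'a::field_char_0"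
  shows "hexp lam N None (int k) = (if k = 0 then 0 else 1/2 * (\<Sum>l\<in>{1..N}. lam l ^ (k - 1)))"
  unfolding hexp_def by (simp add: ipe_None del: One_nat_def)

lemma Uinf_nth:
  fixes lam :: "nat \<Rightarrow> 'a::field_char_0"
  shows "(\<Sum>l\<in>{1..N}. Uc (- lam l)) $ k = - (\<Sum>l\<in>{1..N}. lam l ^ (Suc k))"
  unfolding fps_sum_nth Uc_def by (simp add: sum_negf[symmetric] mult.commute)

lemma inf_eq:
  fixes lam :: "nat \<Rightarrow> 'a::field_char_0" and G :: "nat option \<Rightarrow> nat \<Rightarrow> 'a"
  assumes dl: "distinct_lam lam N"
    and ode: "\<And>n. deriv_t None G n + hact lam N G None n = 0"
  shows "fps_const 2 * (fps_X * fps_deriv (Abs_fps (G None))) + fps_const (- of_nat N) * Abs_fps (G None)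
       + fps_X * (\<Sum>l\<in>{1..N}. Uc (- lam l)) * Abs_fps (G None)
     = - (\<Sum>i\<in>{1..N}. fps_const (G (Some i) 0) * Abs_fps (\<lambda>k. lam i ^ k))"
    (is "?L = ?R")
proof -
  define f where "f = Abs_fps (G None)"
  define U where "U = (\<Sum>l\<in>{1..N}. Uc (- lam l))"
  define h where "h = (\<lambda>i::nat. hexp lam N None (int i))"
  have "?L = fps_const 2 * (fps_X * fps_deriv f) + fps_const (- of_nat N) * f + fps_X * (U * f)"
    unfolding f_def U_def by (simp add: mult.assoc)
  also have "\<dots> = ?R"
  proof (rule fps_ext)
    fix m
    define P where "P = (if m = 0 then 0 else (U * f) $ (m - 1))"
    have lhs: "(fps_const 2 * (fps_X * fps_deriv f) + fps_const (- of_nat N) * f + fps_X * (U * f)) $ m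
        = 2 * (of_nat m * G None m) - of_nat N * G None m + P"
      unfolding P_def f_def by (cases m) (simp_all add: algebra_simps)
    have rhs: "?R $ m = - (\<Sum>i\<in>{1..N}. G (Some i) 0 * lam i ^ m)"
      by (simp add: fps_sum_nth)
    have o: "deriv_t None G (Suc m) + hact lam N G None (Suc m) = 0" by (rule ode)
    have D: "deriv_t None G (Suc m) = - (of_nat m * G None m)" by (simp add: deriv_t_def)
    have h0: "h 0 = 0" unfolding h_def by (simp add: hexp_None_nonpos)
    have h1: "h 1 = 1/2 * of_nat N" by (simp only: h_def hexp_None_nat) simp
    have h2: "h (Suc (Suc i)) = - (1/2 * U $ i)" for i
      by (simp only: h_def U_def Uinf_nth hexp_None_nat) simp
    have S: "(\<Sum>i=0..Suc m. h i * G None (Suc m - i)) = 1/2 * of_nat N * G None m - 1/2 * P"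
    proof -
      have "(\<Sum>i=0..Suc m. h i * G None (Suc m - i)) = h 0 * G None (Suc m) + (\<Sum>i=0..m. h (Suc i) * G None (m - i))"
        by (subst sum.atLeast0_atMost_Suc_shift) simp
      also have "\<dots> = (\<Sum>i=0..m. h (Suc i) * G None (m - i))" using h0 by simp
      also have "\<dots> = 1/2 * of_nat N * G None m - 1/2 * P"
      proof (cases m)
        case 0 then show ?thesis using h1 by (simp add: P_def)
      next
        case (Suc m')
        have "(\<Sum>i=0..m. h (Suc i) * G None (m - i)) = h 1 * G None m + (\<Sum>i=0..m'. h (Suc (Suc i)) * G None (m' - i))"
          unfolding Suc by (subst sum.atLeast0_atMost_Suc_shift) simp
        also have "(\<Sum>i=0..m'. h (Suc (Suc i)) * G None (m' - i)) = - (1/2 * (U * f) $ m')"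
          unfolding h2 fps_mult_nth f_def by (simp add: sum_distrib_left sum_negf)
        finally show ?thesis using h1 Suc by (simp add: P_def)
      qed
      finally show ?thesis .
    qed
    have lm: "lmul (-1) (hexp lam N None) (lift G None) (int (Suc m)) = 1/2 * of_nat N * G None m - 1/2 * P"
    proof -
      have "lmul (-1) (hexp lam N None) (lift G None) (int (Suc m))
          = hexp lam N None (-1) * lift G None (int (Suc m) + 1)
            + (\<Sum>i=0..Suc m. hexp lam N None (int i) * lift G None (int (Suc m - i)))"
        by (rule lmul_split) (rule lift_neg)
      also have "hexp lam N None (-1) = 0" by (simp add: hexp_None_nonpos)
      also have "(\<Sum>i=0..Suc m. hexp lam N None (int i) * lift G None (int (Suc m - i)))
          = (\<Sum>i=0..Suc m. h i * G None (Suc m - i))" unfolding h_def lift_nat ..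
      finally show ?thesis using S by simp
    qed
    have R: "(\<Sum>i\<in>{1..N}. (1/2 * G (Some i) 0) * inv_pow_exp lam (lam i) 1 None (int (Suc m)))
        = 1/2 * (\<Sum>i\<in>{1..N}. G (Some i) 0 * lam i ^ m)"
      by (simp only: ipe_None) (simp add: sum_distrib_left mult.assoc)
    have e0: "- (of_nat m * G None m) + (1/2 * of_nat N * G None m - 1/2 * P - 1/2 * (\<Sum>i\<in>{1..N}. G (Some i) 0 * lam i ^ m)) = 0"
      using o unfolding hact_eq[OF dl] D lm R .
    have ident: "(-2) * (- (of_nat m * G None m) + (1/2 * of_nat N * G None m - 1/2 * P - 1/2 * (\<Sum>i\<in>{1..N}. G (Some i) 0 * lam i ^ m)))
       = (2 * (of_nat m * G None m) - of_nat N * G None m + P) - (- (\<Sum>i\<in>{1..N}. G (Some i) 0 * lam i ^ m))"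
      by (simp add: algebra_simps)
    have "(2 * (of_nat m * G None m) - of_nat N * G None m + P) - (- (\<Sum>i\<in>{1..N}. G (Some i) 0 * lam i ^ m)) = 0"
      by (metis ident e0 mult_zero_right)
    then show "(fps_const 2 * (fps_X * fps_deriv f) + fps_const (- of_nat N) * f + fps_X * (U * f)) $ m = ?R $ m"
      unfolding lhs rhs by (simp only: right_minus_eq)
  qed
  finally show ?thesis .
qed






lemma inv_ode:
  fixes Wv U :: "'a::field_char_0 fps"
  assumes d: "fps_const 2 * fps_deriv Wv = - (U * Wv)" and z: "Wv $ 0 = 1"
  shows "fps_const 2 * fps_deriv (inverse Wv) = U * inverse Wv"
proof -
  define W where "W = inverse Wv"
  have one: "Wv * W = 1" unfolding W_def by (rule inverse_mult_eq_1') (simp add: z)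
  have "fps_deriv (Wv * W) = 0" using one by simp
  then have "Wv * fps_deriv W + fps_deriv Wv * W = 0" by simp
  then have "fps_const 2 * (Wv * fps_deriv W + fps_deriv Wv * W) = 0" by simp
  then have "Wv * (fps_const 2 * fps_deriv W) + (fps_const 2 * fps_deriv Wv) * W = 0"
    by (simp add: algebra_simps)
  then have "Wv * (fps_const 2 * fps_deriv W) = U * (Wv * W)"
    unfolding d by (simp add: algebra_simps add_eq_0_iff)
  also have "\<dots> = Wv * (U * W)" by (simp add: one)
  finally have "Wv * (fps_const 2 * fps_deriv W) = Wv * (U * W)" .
  moreover have "Wv \<noteq> 0" using z by (metis fps_zero_nth zero_neq_one)
  ultimately show ?thesis unfolding W_def by simp
qed

context pv
begin

lemma point_bound:
  fixes f U T Winv :: "'a fps" and a0 :: int and B :: real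
  assumes eq: "fps_const 2 * (fps_X * fps_deriv f) + fps_const (of_int a0) * f + fps_X * U * f = T"
    and Wode: "fps_const 2 * fps_deriv Winv = - (U * Winv)" and W0: "Winv $ 0 = 1"
    and Wint: "intf v Winv" and odd: "odd a0" and Tb: "\<And>n. ge v (-B) (T $ n)"
  shows "\<exists>\<beta>. \<forall>n\<ge>1. ge v (-(log (real p) (real n) + \<beta>)) (f $ n)"
proof -
  define W where "W = inverse Winv"
  have WI: "intf v W" unfolding W_def by (rule intf_inverse[OF Wint W0])
  have one: "Winv * W = 1" unfolding W_def by (rule inverse_mult_eq_1') (simp add: W0)
  have dW: "fps_const 2 * fps_deriv W = U * W" unfolding W_def by (rule inv_ode[OF Wode W0])
  have tr: "fps_const 2 * (fps_X * fps_deriv (W * f)) + fps_const (of_int a0) * (W * f) = W * T"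
    by (rule ode_transform[OF dW eq])
  have ce: "(2 * of_nat n + of_int a0) * (W * f) $ n = (W * T) $ n" for n
    using arg_cong[OF tr, of "\<lambda>F. F $ n"] unfolding ode_coeff .
  show ?thesis
    using final_bound[OF Wint WI one odd Tb ce] by blast
qed

lemma finite_ge_bound: "finite A \<Longrightarrow> \<exists>B. \<forall>x\<in>A. ge v (-B) x"
proof (induction A rule: finite_induct)
  case empty then show ?case by simp
next
  case (insert x F)
  then obtain B where B: "\<forall>y\<in>F. ge v (-B) y" by blast
  define B' where "B' = max B (- real_of_int (v x))"
  have "ge v (-B') x" unfolding B'_def ge_def by auto
  moreover have "\<forall>y\<in>F. ge v (-B') y" using B unfolding B'_def by (meson ge_mono max.cobounded1 neg_le_iff_le)
  ultimately show ?case by blast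
qed


lemma fin_point_bound:
  fixes lam :: "nat \<Rightarrow> 'a" and G :: "nat option \<Rightarrow> nat \<Rightarrow> 'a"
  assumes j: "j \<in> {1..N}" and dl: "distinct_lam lam N"
    and dv: "\<And>i k. i \<in> {1..N} \<Longrightarrow> k \<in> {1..N} \<Longrightarrow> i \<noteq> k \<Longrightarrow> v (lam i - lam k) = 0"
    and ode: "\<And>n. deriv_t (Some j) G n + hact lam N G (Some j) n = 0"
  shows "\<exists>\<beta>. \<forall>n\<ge>1. ge v (-(log (real p) (real n) + \<beta>)) (G (Some j) n)"
proof -
  define S where "S = {1..N} - {j}"
  define cc where "cc = (\<lambda>i. inverse (lam j - lam i))"
  define E where "E = (\<Sum>i\<in>{1..N}-{j}. fps_const (G (Some i) 0) * Uc (inverse (lam j - lam i)))"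
  have finS: "finite S" unfolding S_def by simp
  have U: "Utot lam N j = (\<Sum>i\<in>S. Uc (cc i))" unfolding Utot_def S_def cc_def ..
  have ccge: "ge v 0 (cc i)" if "i \<in> S" for i
  proof -
    have ne: "lam j - lam i \<noteq> 0" using dl that j unfolding distinct_lam_def S_def by auto
    have "v (lam j - lam i) = 0" using dv[of j i] that j unfolding S_def by auto
    then show ?thesis unfolding cc_def ge_def using vinv[OF ne] by simp
  qed
  have Wode: "fps_const 2 * fps_deriv (Wi S cc) = - (Utot lam N j * Wi S cc)"
    unfolding U by (rule Wi_ode[OF finS])
  have Wint: "intf v (Wi S cc)" by (rule intf_Wi) (rule ccge)
  obtain B where B: "\<forall>x\<in>(\<lambda>i. G (Some i) 0) ` {1..N}. ge v (-B) x"
    using finite_ge_bound[of "(\<lambda>i. G (Some i) 0) ` {1..N}"] by blast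
  have eq: "fps_const 2 * (fps_X * fps_deriv (Abs_fps (G (Some j)))) + fps_const (of_int 1) * Abs_fps (G (Some j))
       + fps_X * Utot lam N j * Abs_fps (G (Some j)) = fps_const (G (Some j) 0) + fps_X * E"
    using fin_eq[OF j dl ode] unfolding E_def by simp
  have Tb: "ge v (-B) ((fps_const (G (Some j) 0) + fps_X * E) $ n)" for n
  proof (cases n)
    case 0 then show ?thesis using B j by simp
  next
    case (Suc k)
    have "ge v (-B) (E $ k)"
      unfolding E_def fps_sum_nth fps_mult_left_const_nth
    proof (rule ge_sum)
      fix i assume i: "i \<in> {1..N} - {j}"
      have "ge v (-B + 0) (G (Some i) 0 * Uc (inverse (lam j - lam i)) $ k)"
        using B i ccge[of i] intf_Uc[of "cc i"] unfolding S_def cc_def intf_def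
        by (intro ge_mult) auto
      then show "ge v (-B) (G (Some i) 0 * Uc (inverse (lam j - lam i)) $ k)" by simp
    qed
    then show ?thesis using Suc by simp
  qed
  have "\<exists>\<beta>. \<forall>n\<ge>1. ge v (-(log (real p) (real n) + \<beta>)) (Abs_fps (G (Some j)) $ n)"
    by (rule point_bound[OF eq Wode Wi_0 Wint _ Tb]) simp
  then show ?thesis by simp
qed

lemma inf_point_bound:
  fixes lam :: "nat \<Rightarrow> 'a" and G :: "nat option \<Rightarrow> nat \<Rightarrow> 'a"
  assumes dl: "distinct_lam lam N" and li: "\<And>i. i \<in> {1..N} \<Longrightarrow> ge v 0 (lam i)"
    and oddN: "odd N"
    and ode: "\<And>n. deriv_t None G n + hact lam N G None n = 0"
  shows "\<exists>\<beta>. \<forall>n\<ge>1. ge v (-(log (real p) (real n) + \<beta>)) (G None n)"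
proof -
  define cc where "cc = (\<lambda>l. - lam l)"
  define T where "T = - (\<Sum>i\<in>{1..N}. fps_const (G (Some i) 0) * Abs_fps (\<lambda>k. lam i ^ k))"
  have Wode: "fps_const 2 * fps_deriv (Wi {1..N} cc) = - ((\<Sum>l\<in>{1..N}. Uc (- lam l)) * Wi {1..N} cc)"
    using Wi_ode[of "{1..N}" cc] unfolding cc_def by simp
  have Wint: "intf v (Wi {1..N} cc)" by (rule intf_Wi) (use li ge_neg in \<open>auto simp: cc_def\<close>)
  obtain B where B: "\<forall>x\<in>(\<lambda>i. G (Some i) 0) ` {1..N}. ge v (-B) x"
    using finite_ge_bound[of "(\<lambda>i. G (Some i) 0) ` {1..N}"] by blast
  have eq: "fps_const 2 * (fps_X * fps_deriv (Abs_fps (G None))) + fps_const (of_int (- int N)) * Abs_fps (G None)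
       + fps_X * (\<Sum>l\<in>{1..N}. Uc (- lam l)) * Abs_fps (G None) = T"
    using inf_eq[OF dl ode] unfolding T_def by simp
  have Tb: "ge v (-B) (T $ n)" for n
  proof -
    have "ge v (-B) (\<Sum>i\<in>{1..N}. G (Some i) 0 * lam i ^ n)"
    proof (rule ge_sum)
      fix i assume i: "i \<in> {1..N}"
      have "ge v (-B + 0) (G (Some i) 0 * lam i ^ n)"
        using B i li[OF i] by (intro ge_mult ge_pow) auto
      then show "ge v (-B) (G (Some i) 0 * lam i ^ n)" by simp
    qed
    then show ?thesis unfolding T_def using ge_neg by (simp add: fps_sum_nth)
  qed
  have "\<exists>\<beta>. \<forall>n\<ge>1. ge v (-(log (real p) (real n) + \<beta>)) (Abs_fps (G None) $ n)"
    by (rule point_bound[OF eq Wode Wi_0 Wint _ Tb]) (use oddN in simp)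
  then show ?thesis by simp
qed

lemma uniform_beta:
  fixes F :: "'b \<Rightarrow> nat \<Rightarrow> 'a"
  assumes "finite S" "\<And>x. x \<in> S \<Longrightarrow> \<exists>\<beta>. \<forall>n\<ge>1. ge v (-(log (real p) (real n) + \<beta>)) (F x n)"
  shows "\<exists>\<beta>. \<forall>x\<in>S. \<forall>n\<ge>1. ge v (-(log (real p) (real n) + \<beta>)) (F x n)"
  using assms
proof (induction S rule: finite_induct)
  case empty then show ?case by simp
next
  case (insert x S)
  then obtain b1 where b1: "\<forall>y\<in>S. \<forall>n\<ge>1. ge v (-(log (real p) (real n) + b1)) (F y n)" by blast
  obtain b2 where b2: "\<forall>n\<ge>1. ge v (-(log (real p) (real n) + b2)) (F x n)" using insert by blast
  have "\<forall>y\<in>insert x S. \<forall>n\<ge>1. ge v (-(log (real p) (real n) + max b1 b2)) (F y n)"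
  proof (intro ballI allI impI)
    fix y n assume y: "y \<in> insert x S" and n: "(1::nat) \<le> n"
    show "ge v (-(log (real p) (real n) + max b1 b2)) (F y n)"
    proof (cases "y = x")
      case True
      then have "ge v (-(log (real p) (real n) + b2)) (F y n)" using b2 n by auto
      then show ?thesis by (rule ge_mono) simp
    next
      case False
      then have "ge v (-(log (real p) (real n) + b1)) (F y n)" using b1 n y by auto
      then show ?thesis by (rule ge_mono) simp
    qed
  qed
  then show ?case by blast
qed

end



theorem mainTheorem4:
  fixes v :: "'a::field_char_0 \<Rightarrow> int" and p g :: nat and lam :: "nat \<Rightarrow> 'a"
    and G0 G1 :: "nat option \<Rightarrow> nat \<Rightarrow> 'a"
  assumes "pval_field v p"
    and "g \<ge> 1"
    and "\<forall>i\<in>{1..2*g+1}. lam i = 0 \<or> v (lam i) \<ge> 0"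
    and "\<forall>i\<in>{1..2*g+1}. \<forall>j\<in>{1..2*g+1}. i \<noteq> j \<longrightarrow> lam i \<noteq> lam j \<and> v (lam i - lam j) = 0"
    and "in_H v p lam (2*g+1) G0 G1"
  shows "\<exists>\<alpha> \<beta> :: real. \<forall>mu\<in>LamSet (2*g+1). \<forall>j\<in>{0,1::nat}. \<forall>l::nat. l \<ge> 1 \<longrightarrow>
           (let b = (if j = 0 then G0 else G1) mu l in
             b \<noteq> 0 \<longrightarrow> real_of_int (v b) \<ge> - (\<alpha> * log (real p) (real l) + \<beta>))"
proof -
  interpret pv v p by unfold_locales (rule assms(1))
  define N where "N = 2*g+1"
  have dl: "distinct_lam lam N" using assms(4) unfolding distinct_lam_def N_def by blast
  have dv: "\<And>i k. i \<in> {1..N} \<Longrightarrow> k \<in> {1..N} \<Longrightarrow> i \<noteq> k \<Longrightarrow> v (lam i - lam k) = 0"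
    using assms(4) unfolding N_def by blast
  have li: "\<And>i. i \<in> {1..N} \<Longrightarrow> ge v 0 (lam i)" using assms(3) unfolding N_def ge_def by auto
  have oddN: "odd N" unfolding N_def by simp
  have H: "\<forall>mu\<in>LamSet N. \<forall>n. deriv_t mu G0 n = 0 \<and> deriv_t mu G1 n + hact lam N G1 mu n = 0"
    using assms(5) unfolding in_H_def N_def by blast
  have fin: "finite (LamSet N)" unfolding LamSet_def by simp
  have each: "\<exists>\<beta>. \<forall>n\<ge>1. ge v (-(log (real p) (real n) + \<beta>)) (G1 mu n)" if mu: "mu \<in> LamSet N" for mu
  proof (cases mu)
    case None
    show ?thesis unfolding None
      by (rule inf_point_bound[OF dl li oddN]) (use H mu None in auto)
  next
    case (Some j)
    have j: "j \<in> {1..N}" using mu Some unfolding LamSet_def by auto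
    show ?thesis unfolding Some
      by (rule fin_point_bound[OF j dl dv]) (use H mu Some in auto)
  qed
  obtain \<beta> where \<beta>: "\<forall>mu\<in>LamSet N. \<forall>n\<ge>1. ge v (-(log (real p) (real n) + \<beta>)) (G1 mu n)"
    using uniform_beta[of "LamSet N" G1, OF fin each] by blast
  have G0z: "G0 mu l = 0" if mu: "mu \<in> LamSet N" and l: "l \<ge> 1" for mu l
  proof (cases mu)
    case None
    have "deriv_t mu G0 (l+1) = 0" using H mu by blast
    then have "of_nat l * G0 None l = 0" using None l by (simp add: deriv_t_def)
    then show ?thesis using None l by simp
  next
    case (Some j)
    obtain l' where l': "l = l' + 1" using l by (metis add.commute le_Suc_ex)
    have "deriv_t mu G0 l' = 0" using H mu by blast
    then have "of_nat (l'+1) * G0 mu (l'+1) = 0" using Some by (simp add: deriv_t_def)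
    then show ?thesis using l' by (simp del: of_nat_Suc)
  qed
  have key: "real_of_int (v ((if j = 0 then G0 else G1) mu l)) \<ge> - (1 * log (real p) (real l) + \<beta>)"
    if muN: "mu \<in> LamSet N" and l: "l \<ge> 1" and nz: "(if j = 0 then G0 else G1) mu l \<noteq> 0" for mu j l
  proof (cases "j = 0")
    case True then show ?thesis using G0z[OF muN l] nz by simp
  next
    case False
    have "ge v (-(log (real p) (real l) + \<beta>)) (G1 mu l)" using \<beta> muN l by blast
    then show ?thesis using False nz unfolding ge_def by auto
  qed
  show ?thesis unfolding Let_def N_def[symmetric] using key by blast
qed



end
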